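(* Let $N\ge 1$ and, for $j=1,\ldots,n$, let $\mathsf{E}_j:\mathcal B(\mathbb R^{M_j})\to\mathcal L(\mathcal H^{\otimes N})$ be a Gaussian observable. Then the collection $\{\mathsf{E}_1,\ldots,\mathsf{E}_n\}$ is Gaussian compatible if and only if there exists a Gaussian observable $\mathsf{G}:\mathcal B(\mathbb R^M)\to\mathcal L(\mathcal H^{\otimes N})$, where $M=\sum_{j=1}^n M_j$ and $\mathbb R^M=\mathbb R^{M_1}\times\cdots\times\mathbb R^{M_n}$, which has the $\mathsf{E}_j$ as its margins, i.e. $\mathsf{E}_j(X)=\mathsf{G}(\mathbb R^{M_1}\times\cdots\times\mathbb R^{M_{j-1}}\times X\times\mathbb R^{M_{j+1}}\times\cdots\times\mathbb R^{M_n})$ for all $j$ and all Borel $X\subseteq\mathbb R^{M_j}$.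
   Context: $\mathcal H^{\otimes N}=L^2(\mathbb R^N)$ with canonical position and momentum operators $Q_j,P_j$, ${\bf R}=(Q_1,P_1,\ldots,Q_N,P_N)^T$, ${\bf \Omega}=\bigoplus_{j=1}^N\begin{pmatrix}0&1\\-1&0\end{pmatrix}$, and Weyl operators $W({\bf x})=e^{-i{\bf x}^T{\bf \Omega R}}$ for ${\bf x}\in\mathbb R^{2N}$. An observable is a POVM $\mathsf{E}:\mathcal B(\mathbb R^M)\to\mathcal L(\mathcal H^{\otimes N})$ ($\mathcal L$ = bounded operators). It is Gaussian if its Fourier transform is $\int e^{i{\bf p}^T{\bf x}}\,d\mathsf{E}({\bf x})=W({\bf Kp})e^{-\frac14{\bf p}^T{\bf Lp}-i{\bf m}^T{\bf p}}$ for all ${\bf p}\in\mathbb R^M$, where ${\bf K}$ is a real $2N\times M$ matrix, ${\bf L}$ a real $M\times M$ matrix with ${\bf L}-i{\bf K}^T{\bf \Omega K}\ge 0$, and ${\bf m}\in\mathbb R^M$; every such triple $({\bf K},{\bf L},{\bf m})$ determines a unique Gaussian observable. A Markov kernel $f:\mathcal B(\mathbb R^{M'})\times\mathbb R^M\to[0,1]$ is a map with $f(\cdot,{\bf x})$ a probability measure for each ${\bf x}$ and $f(X,\cdot)$ measurable for each $X$. It is a Gaussian postprocessing if there exist a real $M\times M'$ matrix ${\bf A}$, a real positive semidefinite $M'\times M'$ matrix ${\bf B}$ and ${\bf c}\in\mathbb R^{M'}$ such that $\int e^{i{\bf p}^T{\bf y}}f(d{\bf y},{\bf x})=e^{i({\bf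 Ap})^T{\bf x}}e^{-\frac14{\bf p}^T{\bf Bp}-i{\bf c}^T{\bf p}}$ for all ${\bf p}\in\mathbb R^{M'}$, ${\bf x}\in\mathbb R^M$; applying it to a Gaussian observable $\mathsf{G}$ with parameters $({\bf K},{\bf L},{\bf m})$ gives the observable $\mathsf{E}(X)=\int f(X,{\bf x})\,d\mathsf{G}({\bf x})$, which is Gaussian with parameters $({\bf KA},{\bf B}+{\bf A}^T{\bf LA},{\bf c}+{\bf A}^T{\bf m})$. A collection $\mathcal M$ of Gaussian observables (on the same Hilbert space) is Gaussian compatible if there is a Gaussian observable $\mathsf{G}$ such that every $\mathsf{E}\in\mathcal M$ is obtained from $\mathsf{G}$ via some Gaussian postprocessing. *)

theory Defs
  imports Complex_Main "Jordan_Normal_Form.Matrix" "Jordan_Normal_Form.Conjugate"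
begin

text \<open>Symplectic form Omega = direct sum of N copies of [[0,1],[-1,0]] (0-indexed).\<close>
definition Omega :: "nat \<Rightarrow> real mat" where
  "Omega N = mat (2*N) (2*N) (\<lambda>(a,b).
      if even a \<and> b = a + 1 then 1 else if odd a \<and> a = b + 1 then -1 else 0)"

definition cpsd :: "nat \<Rightarrow> complex mat \<Rightarrow> bool" where
  "cpsd n A \<longleftrightarrow> A \<in> carrier_mat n n \<and>
     (\<forall>z \<in> carrier_vec n. Im ((A *\<^sub>v z) \<bullet>c z) = 0 \<and> 0 \<le> Re ((A *\<^sub>v z) \<bullet>c z))"

definition rpsd :: "nat \<Rightarrow> real mat \<Rightarrow> bool" where
  "rpsd n B \<longleftrightarrow> B \<in> carrier_mat n n \<and> transpose_mat B = B \<and>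
     (\<forall>x \<in> carrier_vec n. 0 \<le> x \<bullet> (B *\<^sub>v x))"

text \<open>A Gaussian observable on L^2(R^N) with outcome space R^M is given by its parameter triple
  (K, L, m) subject to  L - i K^T Omega K >= 0.\<close>
definition gaussian_obs :: "nat \<Rightarrow> nat \<Rightarrow> real mat \<times> real mat \<times> real vec \<Rightarrow> bool" where
  "gaussian_obs N M P \<longleftrightarrow> (case P of (K, L, m) \<Rightarrow>
     K \<in> carrier_mat (2*N) M \<and> L \<in> carrier_mat M M \<and> m \<in> carrier_vec M \<and>
     cpsd M (map_mat complex_of_real L
             - \<i> \<cdot>\<^sub>m map_mat complex_of_real (transpose_mat K * Omega N * K)))"

text \<open>Fourier transform of the observable at p, the operator W(Kp) * c being represented
  by the pair (Kp, c) (W is injective and c is never 0).\<close>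
definition fourier :: "real mat \<times> real mat \<times> real vec \<Rightarrow> real vec \<Rightarrow> real vec \<times> complex" where
  "fourier P p = (case P of (K, L, m) \<Rightarrow>
     (K *\<^sub>v p, exp (complex_of_real (- (1/4) * (p \<bullet> (L *\<^sub>v p))) - \<i> * complex_of_real (m \<bullet> p))))"

definition gauss_postproc :: "nat \<Rightarrow> nat \<Rightarrow> real mat \<times> real mat \<times> real vec
      \<Rightarrow> real mat \<times> real mat \<times> real vec \<Rightarrow> bool" where
  "gauss_postproc M M' G E \<longleftrightarrow> (\<exists>A B c. A \<in> carrier_mat M M' \<and> rpsd M' B \<and> c \<in> carrier_vec M' \<and>
     (\<forall>p \<in> carrier_vec M'.
        fourier E p = (fst (fourier G (A *\<^sub>v p)),
           snd (fourier G (A *\<^sub>v p)) *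
             exp (complex_of_real (- (1/4) * (p \<bullet> (B *\<^sub>v p))) - \<i> * complex_of_real (c \<bullet> p)))))"

definition gaussian_compatible ::
  "nat \<Rightarrow> nat \<Rightarrow> (nat \<Rightarrow> nat) \<Rightarrow> (nat \<Rightarrow> real mat \<times> real mat \<times> real vec) \<Rightarrow> bool" where
  "gaussian_compatible N n Ms E \<longleftrightarrow>
     (\<exists>M G. gaussian_obs N M G \<and> (\<forall>j < n. gauss_postproc M (Ms j) G (E j)))"

text \<open>Offset of block j in R^M = R^(Ms 0) x ... x R^(Ms (n-1)), and the embedding
  of R^(Ms j) into R^M as the j-th block (adjoint of the j-th coordinate projection).\<close>
definition block_offset :: "(nat \<Rightarrow> nat) \<Rightarrow> nat \<Rightarrow> nat" where
  "block_offset Ms j = (\<Sum>i<j. Ms i)"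

definition block_embed :: "nat \<Rightarrow> (nat \<Rightarrow> nat) \<Rightarrow> nat \<Rightarrow> real vec \<Rightarrow> real vec" where
  "block_embed M Ms j q = vec M (\<lambda>a.
     if block_offset Ms j \<le> a \<and> a < block_offset Ms j + Ms j then q $ (a - block_offset Ms j) else 0)"

text \<open>E is the j-th margin of G: the margin E_j(X) = G(pi_j^{-1}(X)) has Fourier transform
  q \<mapsto> FT_G(pi_j^T q).\<close>
definition is_margin :: "nat \<Rightarrow> (nat \<Rightarrow> nat) \<Rightarrow> nat \<Rightarrow> real mat \<times> real mat \<times> real vec
      \<Rightarrow> real mat \<times> real mat \<times> real vec \<Rightarrow> bool" where
  "is_margin M Ms j G E \<longleftrightarrow>
     (\<forall>q \<in> carrier_vec (Ms j). fourier E q = fourier G (block_embed M Ms j q))"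

end

theory Submission
  imports Defs
begin

fun gsum :: "'b::plus \<Rightarrow> (nat \<Rightarrow> 'b) \<Rightarrow> nat \<Rightarrow> 'b" where
  "gsum z f 0 = z"
| "gsum z f (Suc k) = gsum z f k + f k"

definition Pm :: "nat \<Rightarrow> (nat \<Rightarrow> nat) \<Rightarrow> nat \<Rightarrow> real mat" where
  "Pm M Ms j = mat M (Ms j) (\<lambda>(a,b). if a = block_offset Ms j + b then 1 else 0)"

lemma Pm_carrier[simp]: "Pm M Ms j \<in> carrier_mat M (Ms j)"
  by (simp add: Pm_def)

lemma Pm_dims[simp]: "dim_row (Pm M Ms j) = M" "dim_col (Pm M Ms j) = Ms j"
  unfolding Pm_def by (rule dim_row_mat, rule dim_col_mat)

lemma Pm_vec_carrier[simp]: "Pm M Ms j *\<^sub>v q \<in> carrier_vec M"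
  by (rule carrier_vecI) simp

lemma PmT_vec_carrier[simp]: "transpose_mat (Pm M Ms j) *\<^sub>v q \<in> carrier_vec (Ms j)"
  by (rule carrier_vecI) simp

lemma zero_mat_mult_vec[simp]: "v \<in> carrier_vec c \<Longrightarrow> (0\<^sub>m r c :: 'a::semiring_0 mat) *\<^sub>v v = 0\<^sub>v r"
  by (rule eq_vecI) (auto simp: scalar_prod_def)

lemma mat_mult_zero_vec[simp]: "A \<in> carrier_mat r c \<Longrightarrow> (A :: 'a::semiring_0 mat) *\<^sub>v 0\<^sub>v c = 0\<^sub>v r"
  by (rule eq_vecI) (auto simp: scalar_prod_def)

lemma offset_le: assumes "i < n" shows "block_offset Ms i + Ms i \<le> (\<Sum>j<n. Ms j)"
proof -
  have "block_offset Ms i + Ms i = (\<Sum>j<Suc i. Ms j)" by (simp add: block_offset_def)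
  also have "\<dots> \<le> (\<Sum>j<n. Ms j)" by (rule sum_mono2) (use assms in auto)
  finally show ?thesis .
qed

lemma offset_mono: assumes "i < j" shows "block_offset Ms i + Ms i \<le> block_offset Ms j"
proof -
  have "block_offset Ms i + Ms i = (\<Sum>k<Suc i. Ms k)" by (simp add: block_offset_def)
  also have "\<dots> \<le> (\<Sum>k<j. Ms k)" by (rule sum_mono2) (use assms in auto)
  finally show ?thesis by (simp add: block_offset_def)
qed

lemma Pm_embed:
  assumes q: "q \<in> carrier_vec (Ms j)"
  shows "Pm M Ms j *\<^sub>v q = block_embed M Ms j q"
proof (rule eq_vecI)
  show "dim_vec (Pm M Ms j *\<^sub>v q) = dim_vec (block_embed M Ms j q)"
    by (simp add: Pm_def block_embed_def)
  fix a assume a: "a < dim_vec (block_embed M Ms j q)"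
  hence aM: "a < M" by (simp add: block_embed_def)
  let ?o = "block_offset Ms j"
  have "(Pm M Ms j *\<^sub>v q) $ a = (\<Sum>b\<in>{0..<Ms j}. (if a = ?o + b then 1 else 0) * q $ b)"
    using aM q by (simp add: Pm_def scalar_prod_def)
  also have "\<dots> = (\<Sum>b\<in>{0..<Ms j}. if b = a - ?o then (if ?o \<le> a then q $ b else 0) else 0)"
    by (rule sum.cong) auto
  also have "\<dots> = (if ?o \<le> a \<and> a < ?o + Ms j then q $ (a - ?o) else 0)"
    by (subst sum.delta) auto
  also have "\<dots> = block_embed M Ms j q $ a" using aM by (simp add: block_embed_def)
  finally show "(Pm M Ms j *\<^sub>v q) $ a = block_embed M Ms j q $ a" .
qed

lemma PmT_Pm:
  assumes i: "i < n" and j: "j < n" and q: "q \<in> carrier_vec (Ms j)"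
    and M: "M = (\<Sum>k<n. Ms k)"
  shows "transpose_mat (Pm M Ms i) *\<^sub>v (Pm M Ms j *\<^sub>v q) = (if i = j then q else 0\<^sub>v (Ms i))"
proof (rule eq_vecI)
  show "dim_vec (transpose_mat (Pm M Ms i) *\<^sub>v (Pm M Ms j *\<^sub>v q)) = dim_vec (if i = j then q else 0\<^sub>v (Ms i))"
    using q by (simp add: Pm_def)
  fix b assume "b < dim_vec (if i = j then q else 0\<^sub>v (Ms i))"
  hence b: "b < Ms i" using q by (auto split: if_splits)
  let ?v = "block_embed M Ms j q"
  let ?o = "block_offset Ms i"
  have lt: "?o + b < M" using offset_le[OF i, of Ms] b M by simp
  have "(transpose_mat (Pm M Ms i) *\<^sub>v ?v) $ b = (\<Sum>a\<in>{0..<M}. (if a = ?o + b then 1 else 0) * ?v $ a)"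
    using b by (simp add: Pm_def scalar_prod_def block_embed_def)
  also have "\<dots> = (\<Sum>a\<in>{0..<M}. if a = ?o + b then ?v $ a else 0)"
    by (rule sum.cong) auto
  also have "\<dots> = ?v $ (?o + b)" using lt by (subst sum.delta) auto
  also have "\<dots> = (if i = j then q else 0\<^sub>v (Ms i)) $ b"
  proof (cases "i = j")
    case True thus ?thesis using lt b by (simp add: block_embed_def)
  next
    case False
    hence "i < j \<or> j < i" by auto
    hence "\<not> (block_offset Ms j \<le> ?o + b \<and> ?o + b < block_offset Ms j + Ms j)"
      using offset_mono[of i j Ms] offset_mono[of j i Ms] b by auto
    thus ?thesis using lt b False by (auto simp: block_embed_def)
  qed
  finally show "(transpose_mat (Pm M Ms i) *\<^sub>v (Pm M Ms j *\<^sub>v q)) $ b = (if i = j then q else 0\<^sub>v (Ms i)) $ b"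
    using Pm_embed[of q Ms j M, OF q] by simp
qed

lemma cpsd_add: assumes "cpsd n C1" "cpsd n C2" shows "cpsd n (C1 + C2)"
  unfolding cpsd_def
proof (intro conjI ballI)
  show "C1 + C2 \<in> carrier_mat n n" using assms by (auto simp: cpsd_def)
  fix z :: "complex vec" assume z: "z \<in> carrier_vec n"
  have C: "C1 \<in> carrier_mat n n" "C2 \<in> carrier_mat n n" using assms by (auto simp: cpsd_def)
  have e: "((C1 + C2) *\<^sub>v z) \<bullet>c z = (C1 *\<^sub>v z) \<bullet>c z + (C2 *\<^sub>v z) \<bullet>c z"
    using C z by (simp add: add_mult_distrib_mat_vec add_scalar_prod_distrib[of _ n])
  show "Im (((C1 + C2) *\<^sub>v z) \<bullet>c z) = 0" "0 \<le> Re (((C1 + C2) *\<^sub>v z) \<bullet>c z)"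
    unfolding e using assms z by (auto simp: cpsd_def)
qed

lemma conj_real_mat_vec:
  assumes P: "P \<in> carrier_mat m n" and z: "(z :: complex vec) \<in> carrier_vec n"
  shows "conjugate (map_mat complex_of_real P *\<^sub>v z) = map_mat complex_of_real P *\<^sub>v conjugate z"
  by (rule eq_vecI) (use P z in \<open>auto simp: scalar_prod_def\<close>)

lemma cpsd_cong:
  assumes P: "P \<in> carrier_mat m n" and C: "cpsd m C"
  shows "cpsd n (transpose_mat (map_mat complex_of_real P) * C * map_mat complex_of_real P)"
  unfolding cpsd_def
proof (intro conjI ballI)
  let ?P = "map_mat complex_of_real P"
  have Pc: "?P \<in> carrier_mat m n" using P by simp
  have Cc: "C \<in> carrier_mat m m" using C by (simp add: cpsd_def)
  show "transpose_mat ?P * C * ?P \<in> carrier_mat n n" using Pc Cc by simp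
  fix z :: "complex vec" assume z: "z \<in> carrier_vec n"
  have Pz: "?P *\<^sub>v z \<in> carrier_vec m" using Pc z by simp
  have "(transpose_mat ?P * C * ?P *\<^sub>v z) \<bullet>c z = (transpose_mat ?P *\<^sub>v (C *\<^sub>v (?P *\<^sub>v z))) \<bullet>c z"
    using Pc Cc z by (simp add: assoc_mult_mat_vec[of _ n m _ n])
  also have "\<dots> = (C *\<^sub>v (?P *\<^sub>v z)) \<bullet> (?P *\<^sub>v conjugate z)"
    by (rule transpose_vec_mult_scalar[OF Pc]) (use z Pz Cc in auto)
  also have "\<dots> = (C *\<^sub>v (?P *\<^sub>v z)) \<bullet>c (?P *\<^sub>v z)"
    using conj_real_mat_vec[OF P z] by simp
  finally have e: "(transpose_mat ?P * C * ?P *\<^sub>v z) \<bullet>c z = (C *\<^sub>v (?P *\<^sub>v z)) \<bullet>c (?P *\<^sub>v z)" .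
  show "Im ((transpose_mat ?P * C * ?P *\<^sub>v z) \<bullet>c z) = 0" "0 \<le> Re ((transpose_mat ?P * C * ?P *\<^sub>v z) \<bullet>c z)"
    unfolding e using C Pz by (auto simp: cpsd_def)
qed

lemma rpsd_cpsd: assumes B: "rpsd n B" shows "cpsd n (map_mat complex_of_real B)"
  unfolding cpsd_def
proof (intro conjI ballI)
  have Bc: "B \<in> carrier_mat n n" and Bs: "transpose_mat B = B"
    and Bp: "\<And>x. x \<in> carrier_vec n \<Longrightarrow> 0 \<le> x \<bullet> (B *\<^sub>v x)" using B by (auto simp: rpsd_def)
  show "map_mat complex_of_real B \<in> carrier_mat n n" using Bc by simp
  fix z :: "complex vec" assume z: "z \<in> carrier_vec n"
  define x where "x = map_vec Re z"
  define y where "y = map_vec Im z"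
  have x: "x \<in> carrier_vec n" and y: "y \<in> carrier_vec n" using z by (auto simp: x_def y_def)
  have e: "(map_mat complex_of_real B *\<^sub>v z) \<bullet>c z =
     (\<Sum>a\<in>{0..<n}. (\<Sum>b\<in>{0..<n}. complex_of_real (B $$ (a,b)) * z $ b) * cnj (z $ a))"
    using Bc z by (simp add: scalar_prod_def)
  have qf: "u \<bullet> (B *\<^sub>v v) = (\<Sum>a\<in>{0..<n}. \<Sum>b\<in>{0..<n}. B $$ (a,b) * v $ b * u $ a)"
    if "u \<in> carrier_vec n" "v \<in> carrier_vec n" for u v
    using that Bc by (simp add: scalar_prod_def sum_distrib_left sum_distrib_right ac_simps)
  have "Re ((map_mat complex_of_real B *\<^sub>v z) \<bullet>c z) =
     (\<Sum>a\<in>{0..<n}. \<Sum>b\<in>{0..<n}. B $$ (a,b) * (Re (z $ b) * Re (z $ a) + Im (z $ b) * Im (z $ a)))"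
    unfolding e Re_sum by (intro sum.cong refl) (simp add: sum_distrib_right sum_distrib_left sum.distrib Re_sum algebra_simps)
  also have "\<dots> = x \<bullet> (B *\<^sub>v x) + y \<bullet> (B *\<^sub>v y)"
    unfolding qf[OF x x] qf[OF y y] using z
    by (simp add: x_def y_def sum.distrib[symmetric] algebra_simps)
  finally have re: "Re ((map_mat complex_of_real B *\<^sub>v z) \<bullet>c z) = x \<bullet> (B *\<^sub>v x) + y \<bullet> (B *\<^sub>v y)" .
  have "Im ((map_mat complex_of_real B *\<^sub>v z) \<bullet>c z) =
     (\<Sum>a\<in>{0..<n}. \<Sum>b\<in>{0..<n}. B $$ (a,b) * (Im (z $ b) * Re (z $ a) - Re (z $ b) * Im (z $ a)))"
    unfolding e Im_sum by (intro sum.cong refl) (simp add: sum_distrib_right sum_distrib_left sum_subtractf Im_sum algebra_simps)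
  also have "\<dots> = x \<bullet> (B *\<^sub>v y) - y \<bullet> (B *\<^sub>v x)"
    unfolding qf[OF x y] qf[OF y x] using z
    by (simp add: x_def y_def sum_subtractf[symmetric] algebra_simps)
  also have "y \<bullet> (B *\<^sub>v x) = x \<bullet> (B *\<^sub>v y)"
  proof -
    have "y \<bullet> (B *\<^sub>v x) = (transpose_mat B *\<^sub>v y) \<bullet> x"
      by (rule transpose_vec_mult_scalar[OF Bc x y, symmetric])
    also have "\<dots> = x \<bullet> (B *\<^sub>v y)" unfolding Bs
      by (rule comm_scalar_prod[of _ n]) (use Bc y x in auto)
    finally show ?thesis .
  qed
  finally show "Im ((map_mat complex_of_real B *\<^sub>v z) \<bullet>c z) = 0" by simp
  show "0 \<le> Re ((map_mat complex_of_real B *\<^sub>v z) \<bullet>c z)" unfolding re using Bp x y by simp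
qed

lemma Pm_dot: assumes "u \<in> carrier_vec (Ms i)" "w \<in> carrier_vec M"
  shows "w \<bullet> (Pm M Ms i *\<^sub>v u) = (transpose_mat (Pm M Ms i) *\<^sub>v w) \<bullet> u"
proof -
  have "(transpose_mat (Pm M Ms i) *\<^sub>v w) \<bullet> u = w \<bullet> (Pm M Ms i *\<^sub>v u)"
    by (rule transpose_vec_mult_scalar[of "Pm M Ms i" M "Ms i" u w]) (use assms in auto)
  thus ?thesis by (rule sym)
qed

lemma PBP_carrier: "B \<in> carrier_mat (Ms i) (Ms i) \<Longrightarrow> Pm Mt Ms i * B * transpose_mat (Pm Mt Ms i) \<in> carrier_mat Mt Mt"
  by (rule mult_carrier_mat[OF mult_carrier_mat[OF Pm_carrier]]) auto

lemma AA_carrier: "(\<forall>i<k. A i \<in> carrier_mat M (Ms i)) \<Longrightarrow>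
  gsum (0\<^sub>m M Mt) (\<lambda>i. A i * transpose_mat (Pm Mt Ms i)) k \<in> carrier_mat M Mt"
  by (induction k) auto

lemma QQ_carrier: "(\<forall>i<k. B i \<in> carrier_mat (Ms i) (Ms i)) \<Longrightarrow>
  gsum (0\<^sub>m Mt Mt) (\<lambda>i. Pm Mt Ms i * B i * transpose_mat (Pm Mt Ms i)) k \<in> carrier_mat Mt Mt"
proof (induction k)
  case (Suc k)
  have 1: "gsum (0\<^sub>m Mt Mt) (\<lambda>i. Pm Mt Ms i * B i * transpose_mat (Pm Mt Ms i)) k \<in> carrier_mat Mt Mt"
    using Suc by auto
  have 2: "Pm Mt Ms k * B k * transpose_mat (Pm Mt Ms k) \<in> carrier_mat Mt Mt"
    using PBP_carrier[of "B k" Ms k Mt] Suc by auto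
  show ?case using add_carrier_mat[OF 2] by simp
qed simp

lemma cc_carrier: "(\<forall>i<k. c i \<in> carrier_vec (Ms i)) \<Longrightarrow>
  gsum (0\<^sub>v Mt) (\<lambda>i. Pm Mt Ms i *\<^sub>v c i) k \<in> carrier_vec Mt"
proof (induction k)
  case (Suc k)
  thus ?case using add_carrier_vec[OF _ Pm_vec_carrier[of Mt Ms k "c k"]] by simp
qed simp

lemma AA_apply:
  assumes A: "\<forall>i<n. A i \<in> carrier_mat M (Ms i)" and j: "j < n" and q: "q \<in> carrier_vec (Ms j)"
    and Mt: "Mt = (\<Sum>k<n. Ms k)"
  shows "k \<le> n \<Longrightarrow> gsum (0\<^sub>m M Mt) (\<lambda>i. A i * transpose_mat (Pm Mt Ms i)) k *\<^sub>v (Pm Mt Ms j *\<^sub>v q)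
     = (if j < k then A j *\<^sub>v q else 0\<^sub>v M)"
proof (induction k)
  case 0
  then show ?case using q by simp
next
  case (Suc k)
  let ?X = "gsum (0\<^sub>m M Mt) (\<lambda>i. A i * transpose_mat (Pm Mt Ms i)) k"
  let ?w = "Pm Mt Ms j *\<^sub>v q"
  have k: "k < n" using Suc by simp
  have X: "?X \<in> carrier_mat M Mt" using AA_carrier[of k A M Ms Mt] A k by auto
  have Ak: "A k \<in> carrier_mat M (Ms k)" using A k by auto
  have w: "?w \<in> carrier_vec Mt" using q by simp
  have "gsum (0\<^sub>m M Mt) (\<lambda>i. A i * transpose_mat (Pm Mt Ms i)) (Suc k) *\<^sub>v ?w
      = ?X *\<^sub>v ?w + A k *\<^sub>v (transpose_mat (Pm Mt Ms k) *\<^sub>v ?w)"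
  proof -
    have "(A k * transpose_mat (Pm Mt Ms k)) *\<^sub>v ?w = A k *\<^sub>v (transpose_mat (Pm Mt Ms k) *\<^sub>v ?w)"
      by (rule assoc_mult_mat_vec[of _ M "Ms k" _ Mt]) (use Ak w in auto)
    moreover have "A k * transpose_mat (Pm Mt Ms k) \<in> carrier_mat M Mt"
      by (rule mult_carrier_mat[OF Ak]) simp
    ultimately show ?thesis using X w by (simp add: add_mult_distrib_mat_vec[of _ M Mt])
  qed
  also have "transpose_mat (Pm Mt Ms k) *\<^sub>v ?w = (if k = j then q else 0\<^sub>v (Ms k))"
    using PmT_Pm[of k n j q Ms Mt, OF k j q Mt] .
  finally have e: "gsum (0\<^sub>m M Mt) (\<lambda>i. A i * transpose_mat (Pm Mt Ms i)) (Suc k) *\<^sub>v ?w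
      = ?X *\<^sub>v ?w + A k *\<^sub>v (if k = j then q else 0\<^sub>v (Ms k))" .
  have IH: "?X *\<^sub>v ?w = (if j < k then A j *\<^sub>v q else 0\<^sub>v M)" using Suc by simp
  have Ajq: "A j *\<^sub>v q \<in> carrier_vec M" using A j by (intro carrier_vecI) auto
  have Akq: "A k *\<^sub>v q \<in> carrier_vec M" using Ak by (intro carrier_vecI) auto
  show ?case
  proof (cases rule: linorder_cases[of j k])
    case less thus ?thesis using e IH Ak Ajq by simp
  next
    case equal thus ?thesis using e IH Ak Akq by simp
  next
    case greater thus ?thesis using e IH Ak by simp
  qed
qed

lemma QQ_apply:
  assumes B: "\<forall>i<n. B i \<in> carrier_mat (Ms i) (Ms i)" and j: "j < n" and q: "q \<in> carrier_vec (Ms j)"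
    and Mt: "Mt = (\<Sum>k<n. Ms k)"
  shows "k \<le> n \<Longrightarrow> (Pm Mt Ms j *\<^sub>v q) \<bullet> (gsum (0\<^sub>m Mt Mt) (\<lambda>i. Pm Mt Ms i * B i * transpose_mat (Pm Mt Ms i)) k *\<^sub>v (Pm Mt Ms j *\<^sub>v q))
     = (if j < k then q \<bullet> (B j *\<^sub>v q) else 0)"
proof (induction k)
  case 0
  then show ?case using q by simp
next
  case (Suc k)
  let ?X = "gsum (0\<^sub>m Mt Mt) (\<lambda>i. Pm Mt Ms i * B i * transpose_mat (Pm Mt Ms i)) k"
  let ?w = "Pm Mt Ms j *\<^sub>v q"
  let ?P = "Pm Mt Ms k"
  have k: "k < n" using Suc by simp
  have X: "?X \<in> carrier_mat Mt Mt" using QQ_carrier[of k B Ms Mt] B k by auto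
  have Bk: "B k \<in> carrier_mat (Ms k) (Ms k)" using B k by auto
  have w: "?w \<in> carrier_vec Mt" using q by simp
  have v: "transpose_mat ?P *\<^sub>v ?w = (if k = j then q else 0\<^sub>v (Ms k))"
    using PmT_Pm[of k n j q Ms Mt, OF k j q Mt] .
  have vc: "transpose_mat ?P *\<^sub>v ?w \<in> carrier_vec (Ms k)" using w by simp
  have "gsum (0\<^sub>m Mt Mt) (\<lambda>i. Pm Mt Ms i * B i * transpose_mat (Pm Mt Ms i)) (Suc k) *\<^sub>v ?w
      = ?X *\<^sub>v ?w + ?P *\<^sub>v (B k *\<^sub>v (transpose_mat ?P *\<^sub>v ?w))"
  proof -
    have PB: "?P * B k \<in> carrier_mat Mt (Ms k)" using Bk by (intro mult_carrier_mat) auto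
    have PBP: "?P * B k * transpose_mat ?P \<in> carrier_mat Mt Mt" using PBP_carrier[of "B k" Ms k Mt, OF Bk] .
    have "(?P * B k * transpose_mat ?P) *\<^sub>v ?w = (?P * B k) *\<^sub>v (transpose_mat ?P *\<^sub>v ?w)"
      by (rule assoc_mult_mat_vec[OF PB]) (use w in auto)
    also have "\<dots> = ?P *\<^sub>v (B k *\<^sub>v (transpose_mat ?P *\<^sub>v ?w))"
      by (rule assoc_mult_mat_vec[OF _ Bk]) (use vc in auto)
    finally show ?thesis using X w PBP by (simp add: add_mult_distrib_mat_vec[of _ Mt Mt])
  qed
  hence "?w \<bullet> (gsum (0\<^sub>m Mt Mt) (\<lambda>i. Pm Mt Ms i * B i * transpose_mat (Pm Mt Ms i)) (Suc k) *\<^sub>v ?w)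
      = ?w \<bullet> (?X *\<^sub>v ?w) + ?w \<bullet> (?P *\<^sub>v (B k *\<^sub>v (transpose_mat ?P *\<^sub>v ?w)))"
    using X Bk w vc by (simp add: scalar_prod_add_distrib[of _ Mt])
  also have "?w \<bullet> (?P *\<^sub>v (B k *\<^sub>v (transpose_mat ?P *\<^sub>v ?w)))
      = (transpose_mat ?P *\<^sub>v ?w) \<bullet> (B k *\<^sub>v (transpose_mat ?P *\<^sub>v ?w))"
    by (rule Pm_dot) (use Bk vc w in auto)
  finally have e: "?w \<bullet> (gsum (0\<^sub>m Mt Mt) (\<lambda>i. Pm Mt Ms i * B i * transpose_mat (Pm Mt Ms i)) (Suc k) *\<^sub>v ?w)
      = ?w \<bullet> (?X *\<^sub>v ?w) + (if k = j then q else 0\<^sub>v (Ms k)) \<bullet> (B k *\<^sub>v (if k = j then q else 0\<^sub>v (Ms k)))"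
    unfolding v .
  have IH: "?w \<bullet> (?X *\<^sub>v ?w) = (if j < k then q \<bullet> (B j *\<^sub>v q) else 0)" using Suc by simp
  show ?case
  proof (cases rule: linorder_cases[of j k])
    case less thus ?thesis using e IH Bk by simp
  next
    case equal thus ?thesis using e IH Bk by simp
  next
    case greater thus ?thesis using e IH Bk by simp
  qed
qed

lemma cc_apply:
  assumes c: "\<forall>i<n. c i \<in> carrier_vec (Ms i)" and j: "j < n" and q: "q \<in> carrier_vec (Ms j)"
    and Mt: "Mt = (\<Sum>k<n. Ms k)"
  shows "k \<le> n \<Longrightarrow> gsum (0\<^sub>v Mt) (\<lambda>i. Pm Mt Ms i *\<^sub>v c i) k \<bullet> (Pm Mt Ms j *\<^sub>v q)
     = (if j < k then c j \<bullet> q else 0)"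
proof (induction k)
  case 0
  then show ?case using q by simp
next
  case (Suc k)
  let ?X = "gsum (0\<^sub>v Mt) (\<lambda>i. Pm Mt Ms i *\<^sub>v c i) k"
  let ?w = "Pm Mt Ms j *\<^sub>v q"
  let ?P = "Pm Mt Ms k"
  have k: "k < n" using Suc by simp
  have X: "?X \<in> carrier_vec Mt" using cc_carrier[of k c Ms Mt] c k by auto
  have ck: "c k \<in> carrier_vec (Ms k)" using c k by auto
  have w: "?w \<in> carrier_vec Mt" using q by simp
  have v: "transpose_mat ?P *\<^sub>v ?w = (if k = j then q else 0\<^sub>v (Ms k))"
    using PmT_Pm[of k n j q Ms Mt, OF k j q Mt] .
  have vc: "transpose_mat ?P *\<^sub>v ?w \<in> carrier_vec (Ms k)" using w by simp
  have "gsum (0\<^sub>v Mt) (\<lambda>i. Pm Mt Ms i *\<^sub>v c i) (Suc k) \<bullet> ?w = ?X \<bullet> ?w + (?P *\<^sub>v c k) \<bullet> ?w"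
    using X ck w by (simp add: add_scalar_prod_distrib[of _ Mt])
  also have "(?P *\<^sub>v c k) \<bullet> ?w = ?w \<bullet> (?P *\<^sub>v c k)"
    by (rule comm_scalar_prod[of _ Mt]) (use ck w in auto)
  also have "\<dots> = (transpose_mat ?P *\<^sub>v ?w) \<bullet> c k" by (rule Pm_dot) (use ck w in auto)
  also have "\<dots> = c k \<bullet> (transpose_mat ?P *\<^sub>v ?w)"
    by (rule comm_scalar_prod[of _ "Ms k"]) (use ck vc in auto)
  finally have e: "gsum (0\<^sub>v Mt) (\<lambda>i. Pm Mt Ms i *\<^sub>v c i) (Suc k) \<bullet> ?w
      = ?X \<bullet> ?w + c k \<bullet> (if k = j then q else 0\<^sub>v (Ms k))"
    unfolding v .
  have IH: "?X \<bullet> ?w = (if j < k then c j \<bullet> q else 0)" using Suc by simp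
  show ?case
  proof (cases rule: linorder_cases[of j k])
    case less thus ?thesis using e IH ck by simp
  next
    case equal thus ?thesis using e IH ck by simp
  next
    case greater thus ?thesis using e IH ck by simp
  qed
qed

lemma map_add_real: assumes "X \<in> carrier_mat r c" "Y \<in> carrier_mat r c"
  shows "map_mat complex_of_real (X + Y) = map_mat complex_of_real X + map_mat complex_of_real Y"
  by (rule eq_matI) (use assms in auto)

lemma add_swap_mat: fixes P Q R :: "complex mat"
  assumes "P \<in> carrier_mat r c" "Q \<in> carrier_mat r c" "R \<in> carrier_mat r c"
  shows "P + Q - R = (P - R) + Q"
  by (rule eq_matI) (use assms in auto)

lemma cpsd_zero: "cpsd n (0\<^sub>m n n)"
  by (auto simp: cpsd_def)

lemma map_zero_mat: "map_mat complex_of_real (0\<^sub>m r c) = 0\<^sub>m r c"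
  by (rule eq_matI) auto

lemma QQ_cpsd:
  "(\<forall>i<k. rpsd (Ms i) (B i)) \<Longrightarrow>
   cpsd Mt (map_mat complex_of_real (gsum (0\<^sub>m Mt Mt) (\<lambda>i. Pm Mt Ms i * B i * transpose_mat (Pm Mt Ms i)) k))"
proof (induction k)
  case 0
  then show ?case by (simp add: map_zero_mat cpsd_zero)
next
  case (Suc k)
  let ?X = "gsum (0\<^sub>m Mt Mt) (\<lambda>i. Pm Mt Ms i * B i * transpose_mat (Pm Mt Ms i)) k"
  let ?P = "Pm Mt Ms k"
  have Bk: "rpsd (Ms k) (B k)" using Suc by auto
  have Bc: "B k \<in> carrier_mat (Ms k) (Ms k)" using Bk by (simp add: rpsd_def)
  have X: "?X \<in> carrier_mat Mt Mt" using QQ_carrier[of k B Ms Mt] Suc by (auto simp: rpsd_def)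
  have PBP: "?P * B k * transpose_mat ?P \<in> carrier_mat Mt Mt" using PBP_carrier[of "B k" Ms k Mt, OF Bc] .
  have PT: "transpose_mat ?P \<in> carrier_mat (Ms k) Mt" by simp
  have "map_mat complex_of_real (?P * B k * transpose_mat ?P)
      = map_mat complex_of_real (?P * B k) * map_mat complex_of_real (transpose_mat ?P)"
    by (rule of_real_hom.mat_hom_mult[of _ Mt "Ms k"]) (use Bc in auto)
  also have "map_mat complex_of_real (?P * B k) = map_mat complex_of_real ?P * map_mat complex_of_real (B k)"
    by (rule of_real_hom.mat_hom_mult[of _ Mt "Ms k"]) (use Bc in auto)
  also have "map_mat complex_of_real ?P = transpose_mat (map_mat complex_of_real (transpose_mat ?P))"
    by auto
  finally have e: "map_mat complex_of_real (?P * B k * transpose_mat ?P) =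
      transpose_mat (map_mat complex_of_real (transpose_mat ?P)) * map_mat complex_of_real (B k) *
      map_mat complex_of_real (transpose_mat ?P)" .
  have c2: "cpsd Mt (map_mat complex_of_real (?P * B k * transpose_mat ?P))"
    unfolding e by (rule cpsd_cong[OF PT rpsd_cpsd[OF Bk]])
  have c1: "cpsd Mt (map_mat complex_of_real ?X)" using Suc by auto
  show ?case using cpsd_add[OF c1 c2] map_add_real[OF X PBP] by simp
qed

lemma cong_minus:
  fixes Ac L1 Y1 :: "complex mat"
  assumes A: "Ac \<in> carrier_mat m n" and L: "L1 \<in> carrier_mat m m" and Y: "Y1 \<in> carrier_mat m m"
  shows "transpose_mat Ac * (L1 - \<i> \<cdot>\<^sub>m Y1) * Ac = transpose_mat Ac * L1 * Ac - \<i> \<cdot>\<^sub>m (transpose_mat Ac * Y1 * Ac)"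
proof -
  have AT: "transpose_mat Ac \<in> carrier_mat n m" using A by simp
  have "transpose_mat Ac * (L1 - \<i> \<cdot>\<^sub>m Y1) = transpose_mat Ac * L1 - transpose_mat Ac * (\<i> \<cdot>\<^sub>m Y1)"
    by (rule mult_minus_distrib_mat[OF AT L]) (use Y in simp)
  also have "transpose_mat Ac * (\<i> \<cdot>\<^sub>m Y1) = \<i> \<cdot>\<^sub>m (transpose_mat Ac * Y1)"
    by (rule mult_smult_distrib[OF AT Y])
  finally have "transpose_mat Ac * (L1 - \<i> \<cdot>\<^sub>m Y1) * Ac = (transpose_mat Ac * L1 - \<i> \<cdot>\<^sub>m (transpose_mat Ac * Y1)) * Ac"
    by simp
  also have "\<dots> = transpose_mat Ac * L1 * Ac - (\<i> \<cdot>\<^sub>m (transpose_mat Ac * Y1)) * Ac"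
    by (rule minus_mult_distrib_mat[OF _ _ A]) (use AT L Y in auto)
  also have "(\<i> \<cdot>\<^sub>m (transpose_mat Ac * Y1)) * Ac = \<i> \<cdot>\<^sub>m (transpose_mat Ac * Y1 * Ac)"
    by (rule mult_smult_assoc_mat[OF _ A]) (use AT Y in auto)
  finally show ?thesis .
qed

lemma map_cong_real:
  assumes A: "AA \<in> carrier_mat m n" and L: "L \<in> carrier_mat m m"
  shows "map_mat complex_of_real (transpose_mat AA * L * AA) =
    transpose_mat (map_mat complex_of_real AA) * map_mat complex_of_real L * map_mat complex_of_real AA"
proof -
  have "map_mat complex_of_real (transpose_mat AA * L * AA) = map_mat complex_of_real (transpose_mat AA * L) * map_mat complex_of_real AA"
    by (rule of_real_hom.mat_hom_mult[of _ n m]) (use A L in auto)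
  also have "map_mat complex_of_real (transpose_mat AA * L) = map_mat complex_of_real (transpose_mat AA) * map_mat complex_of_real L"
    by (rule of_real_hom.mat_hom_mult[of _ n m]) (use A L in auto)
  finally show ?thesis by (simp add: map_mat_transpose)
qed

lemma Omega_carrier[simp]: "Omega N \<in> carrier_mat (2*N) (2*N)"
  by (simp add: Omega_def)

lemma assoc4:
  assumes A: "A \<in> carrier_mat a b" and B: "B \<in> carrier_mat b d" and C: "C \<in> carrier_mat d d"
    and D: "D \<in> carrier_mat d b" and E: "E \<in> carrier_mat b e"
  shows "A * B * C * (D * E) = A * (B * C * D) * E"
proof -
  have ABC: "A * B * C \<in> carrier_mat a d" using A B C by auto
  have 1: "A * B * C * (D * E) = (A * B * C * D) * E" by (rule assoc_mult_mat[OF ABC D E, symmetric])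
  have 2: "A * B * C = A * (B * C)" by (rule assoc_mult_mat[OF A B C])
  have 3: "A * (B * C) * D = A * (B * C * D)" by (rule assoc_mult_mat[OF A _ D]) (use B C in auto)
  have 4: "A * B * C * D = A * (B * C * D)" by (simp only: 2 3)
  show ?thesis by (simp only: 1 4)
qed

lemma rpsd_zero: "rpsd n (0\<^sub>m n n)"
  by (auto simp: rpsd_def)

lemma backward:
  assumes G: "gaussian_obs N (\<Sum>j<n. Ms j) G"
    and mar: "\<forall>j < n. is_margin (\<Sum>j<n. Ms j) Ms j G (E j)"
  shows "gaussian_compatible N n Ms E"
  unfolding gaussian_compatible_def
proof (intro exI conjI allI impI)
  let ?Mt = "\<Sum>j<n. Ms j"
  show "gaussian_obs N ?Mt G" by fact
  fix j assume j: "j < n"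
  show "gauss_postproc ?Mt (Ms j) G (E j)"
    unfolding gauss_postproc_def
  proof (intro exI conjI ballI)
    show "Pm ?Mt Ms j \<in> carrier_mat ?Mt (Ms j)" by simp
    show "rpsd (Ms j) (0\<^sub>m (Ms j) (Ms j))" by (rule rpsd_zero)
    show "0\<^sub>v (Ms j) \<in> carrier_vec (Ms j)" by simp
    fix p :: "real vec" assume p: "p \<in> carrier_vec (Ms j)"
    have "fourier (E j) p = fourier G (Pm ?Mt Ms j *\<^sub>v p)"
      using mar j p Pm_embed[of p Ms j ?Mt, OF p] by (simp add: is_margin_def)
    moreover have "p \<bullet> (0\<^sub>m (Ms j) (Ms j) *\<^sub>v p) = 0" using p by simp
    moreover have "0\<^sub>v (Ms j) \<bullet> p = 0" using p by simp
    ultimately show "fourier (E j) p = (fst (fourier G (Pm ?Mt Ms j *\<^sub>v p)),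
         snd (fourier G (Pm ?Mt Ms j *\<^sub>v p)) *
         exp (complex_of_real (- (1 / 4) * (p \<bullet> (0\<^sub>m (Ms j) (Ms j) *\<^sub>v p))) - \<i> * complex_of_real (0\<^sub>v (Ms j) \<bullet> p)))"
      by simp
  qed
qed

lemma forward:
  assumes comp: "gaussian_compatible N n Ms E"
  shows "\<exists>G. gaussian_obs N (\<Sum>j<n. Ms j) G \<and> (\<forall>j < n. is_margin (\<Sum>j<n. Ms j) Ms j G (E j))"
proof -
  define Mt where "Mt = (\<Sum>j<n. Ms j)"
  obtain M G where gG: "gaussian_obs N M G" and pp: "\<forall>j<n. gauss_postproc M (Ms j) G (E j)"
    using comp unfolding gaussian_compatible_def by blast
  obtain K L m where Gd: "G = (K, L, m)" by (cases G) auto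
  have K: "K \<in> carrier_mat (2*N) M" and L: "L \<in> carrier_mat M M" and m: "m \<in> carrier_vec M"
    and Cp: "cpsd M (map_mat complex_of_real L
             - \<i> \<cdot>\<^sub>m map_mat complex_of_real (transpose_mat K * Omega N * K))"
    using gG unfolding Gd gaussian_obs_def by auto
  have "\<forall>j. \<exists>A B c. j < n \<longrightarrow> (A \<in> carrier_mat M (Ms j) \<and> rpsd (Ms j) B \<and> c \<in> carrier_vec (Ms j) \<and>
     (\<forall>p \<in> carrier_vec (Ms j).
        fourier (E j) p = (fst (fourier G (A *\<^sub>v p)),
           snd (fourier G (A *\<^sub>v p)) *
             exp (complex_of_real (- (1/4) * (p \<bullet> (B *\<^sub>v p))) - \<i> * complex_of_real (c \<bullet> p)))))"
    using pp unfolding gauss_postproc_def by blast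
  then obtain A B c where H: "\<And>j. j < n \<Longrightarrow> A j \<in> carrier_mat M (Ms j) \<and> rpsd (Ms j) (B j) \<and> c j \<in> carrier_vec (Ms j) \<and>
     (\<forall>p \<in> carrier_vec (Ms j).
        fourier (E j) p = (fst (fourier G (A j *\<^sub>v p)),
           snd (fourier G (A j *\<^sub>v p)) *
             exp (complex_of_real (- (1/4) * (p \<bullet> (B j *\<^sub>v p))) - \<i> * complex_of_real (c j \<bullet> p))))"
    by metis
  have HA: "\<forall>i<n. A i \<in> carrier_mat M (Ms i)" using H by blast
  have HB: "\<forall>i<n. rpsd (Ms i) (B i)" using H by blast
  have HBc: "\<forall>i<n. B i \<in> carrier_mat (Ms i) (Ms i)" using HB by (simp add: rpsd_def)
  have Hc: "\<forall>i<n. c i \<in> carrier_vec (Ms i)" using H by blast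
  define AA where "AA = gsum (0\<^sub>m M Mt) (\<lambda>i. A i * transpose_mat (Pm Mt Ms i)) n"
  define QQ where "QQ = gsum (0\<^sub>m Mt Mt) (\<lambda>i. Pm Mt Ms i * B i * transpose_mat (Pm Mt Ms i)) n"
  define cc where "cc = gsum (0\<^sub>v Mt) (\<lambda>i. Pm Mt Ms i *\<^sub>v c i) n"
  have AA: "AA \<in> carrier_mat M Mt" unfolding AA_def using AA_carrier HA by blast
  have QQ: "QQ \<in> carrier_mat Mt Mt" unfolding QQ_def using QQ_carrier HBc by blast
  have cc: "cc \<in> carrier_vec Mt" unfolding cc_def using cc_carrier Hc by blast
  define L' where "L' = transpose_mat AA * L * AA + QQ"
  define K' where "K' = K * AA"
  define m' where "m' = transpose_mat AA *\<^sub>v m + cc"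
  have AT: "transpose_mat AA \<in> carrier_mat Mt M" using AA by simp
  have ALA: "transpose_mat AA * L * AA \<in> carrier_mat Mt Mt" using AT L AA by auto
  have L': "L' \<in> carrier_mat Mt Mt" unfolding L'_def using ALA QQ by simp
  have K': "K' \<in> carrier_mat (2*N) Mt" unfolding K'_def using K AA by auto
  have m': "m' \<in> carrier_vec Mt" unfolding m'_def using AT m cc by simp
  define Y where "Y = transpose_mat K * Omega N * K"
  have Y: "Y \<in> carrier_mat M M" unfolding Y_def using K by auto
  have KY: "transpose_mat K' * Omega N * K' = transpose_mat AA * Y * AA"
  proof -
    have "transpose_mat K' = transpose_mat AA * transpose_mat K"
      unfolding K'_def by (rule transpose_mult[OF K AA])
    hence "transpose_mat K' * Omega N * K' = transpose_mat AA * transpose_mat K * Omega N * (K * AA)"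
      by (simp add: K'_def)
    also have "\<dots> = transpose_mat AA * (transpose_mat K * Omega N * K) * AA"
      by (rule assoc4[OF AT _ Omega_carrier K AA]) (use K in simp)
    finally show ?thesis unfolding Y_def .
  qed
  let ?Ac = "map_mat complex_of_real AA"
  let ?C = "map_mat complex_of_real L - \<i> \<cdot>\<^sub>m map_mat complex_of_real Y"
  have Ac: "?Ac \<in> carrier_mat M Mt" using AA by simp
  have mateq: "map_mat complex_of_real L' - \<i> \<cdot>\<^sub>m map_mat complex_of_real (transpose_mat K' * Omega N * K')
      = (transpose_mat ?Ac * ?C * ?Ac) + map_mat complex_of_real QQ"
  proof -
    have "transpose_mat ?Ac * ?C * ?Ac = transpose_mat ?Ac * map_mat complex_of_real L * ?Ac - \<i> \<cdot>\<^sub>m (transpose_mat ?Ac * map_mat complex_of_real Y * ?Ac)"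
      by (rule cong_minus[OF Ac]) (use L Y in auto)
    also have "\<dots> = map_mat complex_of_real (transpose_mat AA * L * AA) - \<i> \<cdot>\<^sub>m map_mat complex_of_real (transpose_mat AA * Y * AA)"
      using map_cong_real[OF AA L] map_cong_real[OF AA Y] by simp
    finally have e: "transpose_mat ?Ac * ?C * ?Ac = map_mat complex_of_real (transpose_mat AA * L * AA) - \<i> \<cdot>\<^sub>m map_mat complex_of_real (transpose_mat AA * Y * AA)" .
    have X1: "map_mat complex_of_real (transpose_mat AA * L * AA) \<in> carrier_mat Mt Mt" using ALA by simp
    have X2: "map_mat complex_of_real QQ \<in> carrier_mat Mt Mt" using QQ by simp
    have X3: "\<i> \<cdot>\<^sub>m map_mat complex_of_real (transpose_mat AA * Y * AA) \<in> carrier_mat Mt Mt" using AT Y AA by simp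
    show ?thesis unfolding e KY L'_def map_add_real[OF ALA QQ]
      by (rule add_swap_mat[OF X1 X2 X3])
  qed
  have cpsdC: "cpsd M ?C" using Cp unfolding Y_def .
  have cp: "cpsd Mt (map_mat complex_of_real L' - \<i> \<cdot>\<^sub>m map_mat complex_of_real (transpose_mat K' * Omega N * K'))"
    unfolding mateq
    by (rule cpsd_add[OF cpsd_cong[OF AA cpsdC]]) (unfold QQ_def, rule QQ_cpsd, use HB in blast)
  have gobs: "gaussian_obs N Mt (K', L', m')"
    unfolding gaussian_obs_def using K' L' m' cp by simp
  have marg: "is_margin Mt Ms j (K', L', m') (E j)" if j: "j < n" for j
    unfolding is_margin_def
  proof
    fix q :: "real vec" assume q: "q \<in> carrier_vec (Ms j)"
    let ?w = "Pm Mt Ms j *\<^sub>v q"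
    let ?p = "A j *\<^sub>v q"
    have Aj: "A j \<in> carrier_mat M (Ms j)" using HA j by auto
    have p: "?p \<in> carrier_vec M" using Aj q by auto
    have w: "?w \<in> carrier_vec Mt" by simp
    have be: "block_embed Mt Ms j q = ?w" using Pm_embed[of q Ms j Mt, OF q] by simp
    have Aw: "AA *\<^sub>v ?w = ?p" unfolding AA_def using AA_apply[OF HA j q Mt_def, of n] j by simp
    have f1: "K' *\<^sub>v ?w = K *\<^sub>v ?p" unfolding K'_def using K AA w Aw by simp
    have Lp: "L *\<^sub>v ?p \<in> carrier_vec M" using L p by simp
    have "?w \<bullet> (L' *\<^sub>v ?w) = ?w \<bullet> (transpose_mat AA *\<^sub>v (L *\<^sub>v ?p)) + ?w \<bullet> (QQ *\<^sub>v ?w)"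
    proof -
      have "L' *\<^sub>v ?w = (transpose_mat AA * L * AA) *\<^sub>v ?w + QQ *\<^sub>v ?w"
        unfolding L'_def by (rule add_mult_distrib_mat_vec[OF ALA QQ w])
      also have "(transpose_mat AA * L * AA) *\<^sub>v ?w = transpose_mat AA *\<^sub>v (L *\<^sub>v ?p)"
      proof -
        have ATL: "transpose_mat AA * L \<in> carrier_mat Mt M" using AT L by simp
        have "(transpose_mat AA * L * AA) *\<^sub>v ?w = (transpose_mat AA * L) *\<^sub>v (AA *\<^sub>v ?w)"
          by (rule assoc_mult_mat_vec[OF ATL AA w])
        also have "\<dots> = transpose_mat AA *\<^sub>v (L *\<^sub>v ?p)"
          unfolding Aw by (rule assoc_mult_mat_vec[OF AT L p])
        finally show ?thesis .
      qed
      finally show ?thesis using w AT Lp QQ by (simp add: scalar_prod_add_distrib[of _ Mt])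
    qed
    also have "?w \<bullet> (transpose_mat AA *\<^sub>v (L *\<^sub>v ?p)) = ?p \<bullet> (L *\<^sub>v ?p)"
    proof -
      have "?w \<bullet> (transpose_mat AA *\<^sub>v (L *\<^sub>v ?p)) = (transpose_mat AA *\<^sub>v (L *\<^sub>v ?p)) \<bullet> ?w"
        by (rule comm_scalar_prod[of _ Mt]) (use w AT Lp in auto)
      also have "\<dots> = (L *\<^sub>v ?p) \<bullet> (AA *\<^sub>v ?w)" by (rule transpose_vec_mult_scalar[OF AA w Lp])
      also have "\<dots> = ?p \<bullet> (L *\<^sub>v ?p)" unfolding Aw by (rule comm_scalar_prod[of _ M]) (use Lp p in auto)
      finally show ?thesis .
    qed
    also have "?w \<bullet> (QQ *\<^sub>v ?w) = q \<bullet> (B j *\<^sub>v q)"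
      unfolding QQ_def using QQ_apply[OF HBc j q Mt_def, of n] j by simp
    finally have f2: "?w \<bullet> (L' *\<^sub>v ?w) = ?p \<bullet> (L *\<^sub>v ?p) + q \<bullet> (B j *\<^sub>v q)" .
    have "m' \<bullet> ?w = (transpose_mat AA *\<^sub>v m) \<bullet> ?w + cc \<bullet> ?w"
      unfolding m'_def using AT m cc w by (simp add: add_scalar_prod_distrib[of _ Mt])
    also have "(transpose_mat AA *\<^sub>v m) \<bullet> ?w = m \<bullet> ?p"
      using transpose_vec_mult_scalar[OF AA w m] Aw by simp
    also have "cc \<bullet> ?w = c j \<bullet> q"
      unfolding cc_def using cc_apply[OF Hc j q Mt_def, of n] j by simp
    finally have f3: "m' \<bullet> ?w = m \<bullet> ?p + c j \<bullet> q" .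
    have mp: "m \<bullet> ?p = ?p \<bullet> m" by (rule comm_scalar_prod[of _ M]) (use m p in auto)
    have EJ: "fourier (E j) q = (fst (fourier G ?p), snd (fourier G ?p) *
             exp (complex_of_real (- (1/4) * (q \<bullet> (B j *\<^sub>v q))) - \<i> * complex_of_real (c j \<bullet> q)))"
      using H[OF j] q by blast
    have ex: "exp (complex_of_real (- (1 / 4) * (?p \<bullet> (L *\<^sub>v ?p))) - \<i> * complex_of_real (m \<bullet> ?p)) *
          exp (complex_of_real (- (1/4) * (q \<bullet> (B j *\<^sub>v q))) - \<i> * complex_of_real (c j \<bullet> q))
        = exp (complex_of_real (- (1 / 4) * (?p \<bullet> (L *\<^sub>v ?p) + q \<bullet> (B j *\<^sub>v q))) - \<i> * complex_of_real (m \<bullet> ?p + c j \<bullet> q))"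
      by (simp add: exp_add[symmetric] algebra_simps)
    show "fourier (E j) q = fourier (K', L', m') (block_embed Mt Ms j q)"
      unfolding EJ be using f1 f2 f3 ex mp by (simp add: fourier_def Gd)
  qed
  show ?thesis unfolding Mt_def[symmetric] using gobs marg by blast
qed

theorem proposition1:
  fixes N n :: nat and Ms :: "nat \<Rightarrow> nat"
    and E :: "nat \<Rightarrow> real mat \<times> real mat \<times> real vec"
  assumes "N \<ge> 1"
    and "\<forall>j < n. gaussian_obs N (Ms j) (E j)"
  shows "gaussian_compatible N n Ms E \<longleftrightarrow>
    (\<exists>G. gaussian_obs N (\<Sum>j<n. Ms j) G \<and>
         (\<forall>j < n. is_margin (\<Sum>j<n. Ms j) Ms j G (E j)))"
  using forward[of N n Ms E] backward[where E=E and N=N and n=n and Ms=Ms] by blast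

end
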